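(* Let $G$ be a finite group and let $p\in\pi(G)$ be a prime with $p\in\mu(G)$. Then $p^{p-2}$ divides $\kappa(G)$.
   Context: For a finite group $G$, the power graph $\mathcal{P}(G)$ is the simple undirected graph with vertex set $G$, two distinct vertices $x,y$ being adjacent iff $\langle x\rangle\subseteq\langle y\rangle$ or $\langle y\rangle\subseteq\langle x\rangle$; $\kappa(G)$ is the number of spanning trees of $\mathcal{P}(G)$. $\pi(G)$ is the set of prime divisors of $|G|$. $\pi_e(G)$ is the set of orders of elements of $G$, and $\mu(G)$ is the set of elements of $\pi_e(G)$ that are maximal with respect to divisibility. *)

theory Defs
  imports "HOL-Algebra.Algebra" "HOL-Computational_Algebra.Primes"
begin

definition graph_edges :: "'a set \<Rightarrow> ('a \<Rightarrow> 'a \<Rightarrow> bool) \<Rightarrow> 'a set set" where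
  "graph_edges V adj = {{x, y} | x y. x \<in> V \<and> y \<in> V \<and> x \<noteq> y \<and> adj x y}"

definition edge_rel :: "'a set set \<Rightarrow> 'a \<Rightarrow> 'a \<Rightarrow> bool" where
  "edge_rel E x y \<longleftrightarrow> x \<noteq> y \<and> {x, y} \<in> E"

definition graph_connected :: "'a set \<Rightarrow> 'a set set \<Rightarrow> bool" where
  "graph_connected V E \<longleftrightarrow> (\<forall>x\<in>V. \<forall>y\<in>V. (edge_rel E)\<^sup>*\<^sup>* x y)"

definition is_cycle :: "'a set set \<Rightarrow> 'a list \<Rightarrow> bool" where
  "is_cycle E vs \<longleftrightarrow> length vs \<ge> 3 \<and> distinct vs
     \<and> (\<forall>i < length vs - 1. edge_rel E (vs ! i) (vs ! Suc i))
     \<and> edge_rel E (last vs) (hd vs)"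

definition acyclic_graph :: "'a set set \<Rightarrow> bool" where
  "acyclic_graph E \<longleftrightarrow> (\<nexists>vs. is_cycle E vs)"

definition spanning_tree :: "'a set \<Rightarrow> 'a set set \<Rightarrow> 'a set set \<Rightarrow> bool" where
  "spanning_tree V E T \<longleftrightarrow> T \<subseteq> E \<and> graph_connected V T \<and> acyclic_graph T"

definition num_spanning_trees :: "'a set \<Rightarrow> 'a set set \<Rightarrow> nat" where
  "num_spanning_trees V E = card {T. spanning_tree V E T}"

definition power_adj :: "('a, 'b) monoid_scheme \<Rightarrow> 'a \<Rightarrow> 'a \<Rightarrow> bool" where
  "power_adj G x y \<longleftrightarrow> generate G {x} \<subseteq> generate G {y} \<or> generate G {y} \<subseteq> generate G {x}"

definition power_graph_edges :: "('a, 'b) monoid_scheme \<Rightarrow> 'a set set" where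
  "power_graph_edges G = graph_edges (carrier G) (power_adj G)"

definition kappa :: "('a, 'b) monoid_scheme \<Rightarrow> nat" where
  "kappa G = num_spanning_trees (carrier G) (power_graph_edges G)"

definition prime_divs :: "('a, 'b) monoid_scheme \<Rightarrow> nat set" where
  "prime_divs G = {p. Factorial_Ring.prime p \<and> p dvd order G}"

definition elem_orders :: "('a, 'b) monoid_scheme \<Rightarrow> nat set" where
  "elem_orders G = group.ord G ` carrier G"

definition max_elem_orders :: "('a, 'b) monoid_scheme \<Rightarrow> nat set" where
  "max_elem_orders G = {m \<in> elem_orders G. \<forall>k \<in> elem_orders G. m dvd k \<longrightarrow> k = m}"

end

theory Submission
  imports Defs
begin

definition pstep :: "('a \<Rightarrow> 'a) \<Rightarrow> 'a set \<Rightarrow> 'a \<Rightarrow> 'a \<Rightarrow> bool" where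
  "pstep f W x y \<longleftrightarrow> x \<in> W \<and> y = f x"

definition PF :: "'a set \<Rightarrow> 'a set set \<Rightarrow> 'a \<Rightarrow> ('a \<Rightarrow> 'a) set" where
  "PF V E c = {f. f \<in> extensional (V - {c}) \<and> (\<forall>v\<in>V-{c}. edge_rel E v (f v))
      \<and> (\<forall>v\<in>V. (pstep f (V-{c}))\<^sup>*\<^sup>* v c)}"

definition tree_of :: "('a \<Rightarrow> 'a) \<Rightarrow> 'a set \<Rightarrow> 'a set set" where
  "tree_of f W = (\<lambda>v. {v, f v}) ` W"

definition edges_ok :: "'a set \<Rightarrow> 'a set set \<Rightarrow> bool" where
  "edges_ok V E \<longleftrightarrow> (\<forall>e\<in>E. \<exists>x y. x \<in> V \<and> y \<in> V \<and> x \<noteq> y \<and> e = {x,y})"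

lemma edge_rel_sym: "edge_rel E x y \<Longrightarrow> edge_rel E y x"
  by (auto simp: edge_rel_def insert_commute)

lemma edge_rel_mono: "T \<subseteq> E \<Longrightarrow> edge_rel T x y \<Longrightarrow> edge_rel E x y"
  by (auto simp: edge_rel_def)

lemma edge_rel_in: "edges_ok V E \<Longrightarrow> edge_rel E x y \<Longrightarrow> x \<in> V \<and> y \<in> V"
  unfolding edges_ok_def edge_rel_def by (auto simp: doubleton_eq_iff)

lemma rtranclp_edge_sym: "(edge_rel T)\<^sup>*\<^sup>* x y \<Longrightarrow> (edge_rel T)\<^sup>*\<^sup>* y x"
  by (induction rule: rtranclp_induct) (auto intro: converse_rtranclp_into_rtranclp edge_rel_sym)

lemma rtranclp_mono': "(\<And>x y. r x y \<Longrightarrow> s x y) \<Longrightarrow> r\<^sup>*\<^sup>* a b \<Longrightarrow> s\<^sup>*\<^sup>* a b"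
  by (metis mono_rtranclp)

lemma closed_no_reach:
  assumes "(pstep f W)\<^sup>*\<^sup>* v y" "v \<in> C" "\<forall>x\<in>C\<inter>W. f x \<in> C"
  shows "y \<in> C"
  using assms by (induction rule: rtranclp_induct) (auto simp: pstep_def)

definition dep :: "('a \<Rightarrow> 'a \<Rightarrow> bool) \<Rightarrow> 'a \<Rightarrow> 'a \<Rightarrow> nat" where
  "dep R c v = (LEAST n. (R ^^ n) v c)"

lemma dep_ex: "R\<^sup>*\<^sup>* v c \<Longrightarrow> (R ^^ dep R c v) v c"
  unfolding dep_def rtranclp_power by (rule LeastI_ex)

lemma dep_le: "(R ^^ n) v c \<Longrightarrow> dep R c v \<le> n"
  unfolding dep_def by (rule Least_le)

lemma dep_Suc:
  assumes "v \<in> W" "c \<notin> W" "(pstep f W)\<^sup>*\<^sup>* v c"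
  shows "(pstep f W)\<^sup>*\<^sup>* (f v) c \<and> dep (pstep f W) c v = Suc (dep (pstep f W) c (f v))"
proof -
  let ?R = "pstep f W"
  have r: "?R\<^sup>*\<^sup>* (f v) c"
    using assms(3) proof (cases rule: converse_rtranclpE)
    case base then show ?thesis using assms by auto
  next
    case (step w) then show ?thesis by (auto simp: pstep_def)
  qed
  have a: "(?R ^^ dep ?R c v) v c" using dep_ex[OF assms(3)] .
  have "dep ?R c v \<noteq> 0"
  proof
    assume "dep ?R c v = 0"
    then have "v = c" using a by simp
    then show False using assms by auto
  qed
  then obtain n where n: "dep ?R c v = Suc n" by (cases "dep ?R c v") auto
  from a n have "(?R ^^ Suc n) v c" by simp
  then obtain w where "?R v w" "(?R ^^ n) w c" using relpowp_Suc_D2 by metis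
  then have "dep ?R c (f v) \<le> n" by (auto simp: pstep_def intro: dep_le)
  moreover have "?R v (f v)" using assms(1) by (simp add: pstep_def)
  then have "(?R ^^ Suc (dep ?R c (f v))) v c" using dep_ex[OF r] by (rule relpowp_Suc_I2)
  then have "dep ?R c v \<le> Suc (dep ?R c (f v))" by (rule dep_le)
  ultimately show ?thesis using r n by simp
qed

lemma tree_of_edge:
  "edge_rel (tree_of f W) a b \<Longrightarrow> (a \<in> W \<and> f a = b) \<or> (b \<in> W \<and> f b = a)"
  unfolding edge_rel_def tree_of_def by (auto simp: doubleton_eq_iff)

lemma PF_tree:
  assumes f: "f \<in> PF V E c" and c: "c \<in> V" and ok: "edges_ok V E"
  shows "spanning_tree V E (tree_of f (V - {c}))"
proof -
  let ?W = "V - {c}"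
  let ?T = "tree_of f ?W"
  let ?R = "pstep f ?W"
  have fe: "\<And>v. v \<in> ?W \<Longrightarrow> edge_rel E v (f v)" and reach: "\<And>v. v \<in> V \<Longrightarrow> ?R\<^sup>*\<^sup>* v c"
    using f by (auto simp: PF_def)
  have TE: "?T \<subseteq> E" using fe by (auto simp: tree_of_def edge_rel_def)
  have RT: "\<And>x y. ?R x y \<Longrightarrow> edge_rel ?T x y"
    using fe by (auto simp: pstep_def tree_of_def edge_rel_def)
  have RT2: "(edge_rel ?T)\<^sup>*\<^sup>* x y" if "?R\<^sup>*\<^sup>* x y" for x y
    using that by (induction rule: rtranclp_induct) (auto intro: rtranclp.rtrancl_into_rtrancl RT)
  have toc: "(edge_rel ?T)\<^sup>*\<^sup>* v c" if "v \<in> V" for v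
    using reach[OF that] RT2 by blast
  have conn: "graph_connected V ?T"
    unfolding graph_connected_def
    using toc rtranclp_edge_sym by (metis rtranclp_trans)
  have acyc: "acyclic_graph ?T"
    unfolding acyclic_graph_def
  proof
    assume "\<exists>vs. is_cycle ?T vs"
    then obtain vs where cy: "is_cycle ?T vs" by blast
    define L where "L = length vs"
    have L3: "L \<ge> 3" and dist: "distinct vs"
      and cons: "\<forall>i < L - 1. edge_rel ?T (vs ! i) (vs ! Suc i)"
      and clo: "edge_rel ?T (last vs) (hd vs)"
      using cy by (auto simp: is_cycle_def L_def)
    have ne: "vs \<noteq> []" using L3 L_def by auto
    define sc where "sc i = (if i = L - 1 then 0 else Suc i)" for i
    have esc: "edge_rel ?T (vs ! i) (vs ! sc i)" if "i < L" for i
    proof (cases "i = L - 1")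
      case True
      then show ?thesis using clo ne that by (simp add: sc_def last_conv_nth hd_conv_nth L_def)
    next
      case False
      then show ?thesis using cons that by (simp add: sc_def)
    qed
    define pr where "pr i = (if i = 0 then L - 1 else i - 1)" for i
    have epr: "edge_rel ?T (vs ! i) (vs ! pr i)" if "i < L" for i
    proof (cases "i = 0")
      case True
      then show ?thesis using clo ne that edge_rel_sym by (simp add: pr_def last_conv_nth hd_conv_nth L_def) (blast intro: edge_rel_sym)
    next
      case False
      have "i - 1 < L - 1" using False that by simp
      then have "edge_rel ?T (vs ! (i - 1)) (vs ! Suc (i - 1))" using cons by blast
      moreover have "Suc (i - 1) = i" using False by simp
      ultimately have "edge_rel ?T (vs ! (i - 1)) (vs ! i)" by simp
      then show ?thesis using False by (simp add: pr_def edge_rel_sym)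
    qed
    have inV: "vs ! i \<in> V" if "i < L" for i
      using esc[OF that] edge_rel_in[OF ok] edge_rel_mono[OF TE] by blast
    let ?d = "\<lambda>i. dep ?R c (vs ! i)"
    define M where "M = Max (?d ` {..<L})"
    have "M \<in> ?d ` {..<L}" unfolding M_def using L3 by (intro Max_in) (auto simp: lessThan_empty_iff)
    then obtain m where m: "m < L" "?d m = M" by auto
    have mx: "?d i \<le> ?d m" if "i < L" for i 
    proof -
      have "?d i \<le> M" unfolding M_def using that by (intro Max_ge) auto
      then show ?thesis using m by simp
    qed
    have key: "f (vs ! m) = vs ! j" if j: "j < L" and e: "edge_rel ?T (vs ! m) (vs ! j)" for j
    proof -
      from tree_of_edge[OF e] show ?thesis
      proof
        assume "vs ! j \<in> ?W \<and> f (vs ! j) = vs ! m"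
        then have "?d j = Suc (?d m)" using dep_Suc[of "vs ! j" ?W c f] reach[OF inV[OF j]] by auto
        then show ?thesis using mx[OF j] by simp
      qed auto
    qed
    have sL: "sc m < L" "pr m < L" using m L3 by (auto simp: sc_def pr_def)
    have "vs ! sc m = vs ! pr m" using key[OF sL(1) esc[OF m(1)]] key[OF sL(2) epr[OF m(1)]] by simp
    then have "sc m = pr m" using dist sL by (simp add: L_def nth_eq_iff_index_eq)
    then show False using L3 m(1) by (auto simp: sc_def pr_def split: if_splits)
  qed
  show ?thesis using TE conn acyc by (simp add: spanning_tree_def)
qed

lemma PF_inj:
  assumes c: "c \<in> V" and ok: "edges_ok V E"
  shows "inj_on (\<lambda>f. tree_of f (V - {c})) (PF V E c)"
proof (rule inj_onI)
  let ?W = "V - {c}"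
  fix f g assume f: "f \<in> PF V E c" and g: "g \<in> PF V E c" and eq: "tree_of f ?W = tree_of g ?W"
  have fe: "\<And>v. v \<in> ?W \<Longrightarrow> edge_rel E v (f v)" and ge: "\<And>v. v \<in> ?W \<Longrightarrow> edge_rel E v (g v)"
    and gr: "\<And>v. v \<in> V \<Longrightarrow> (pstep g ?W)\<^sup>*\<^sup>* v c"
    and fx: "f \<in> extensional ?W" and gx: "g \<in> extensional ?W"
    using f g by (auto simp: PF_def)
  define D where "D = {v \<in> ?W. f v \<noteq> g v}"
  have step: "g v \<in> D" if vD: "v \<in> D" for v
  proof -
    have vW: "v \<in> ?W" and ne: "f v \<noteq> g v" using vD by (auto simp: D_def)
    have "{v, g v} \<in> tree_of f ?W" using eq vW by (auto simp: tree_of_def)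
    then obtain x where x: "x \<in> ?W" "{v, g v} = {x, f x}" by (auto simp: tree_of_def)
    then have gvW: "g v \<in> ?W" and fgv: "f (g v) = v"
      using ne by (auto simp: doubleton_eq_iff)
    have "g (g v) \<noteq> v"
    proof
      assume gg: "g (g v) = v"
      have "c \<in> {v, g v}"
        using closed_no_reach[OF gr[of v], of "{v, g v}"] vW gg by auto
      then show False using vW gvW by auto
    qed
    then show ?thesis using gvW fgv by (auto simp: D_def)
  qed
  have "D = {}"
  proof (rule ccontr)
    assume "D \<noteq> {}"
    then obtain v where v: "v \<in> D" by auto
    have "c \<in> D" using closed_no_reach[OF gr[of v], of D] v step by (auto simp: D_def)
    then show False by (auto simp: D_def)
  qed
  show "f = g"
  proof
    fix x show "f x = g x"
    proof (cases "x \<in> ?W")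
      case True then show ?thesis using \<open>D = {}\<close> by (auto simp: D_def)
    next
      case False then show ?thesis using fx gx by (simp add: extensional_def)
    qed
  qed
qed

definition walk :: "('a \<Rightarrow> 'a \<Rightarrow> bool) \<Rightarrow> 'a list \<Rightarrow> bool" where
  "walk R xs \<longleftrightarrow> (\<forall>i < length xs - 1. R (xs ! i) (xs ! Suc i))"

lemma distinct_walk:
  assumes "R\<^sup>*\<^sup>* a b"
  shows "\<exists>xs. xs \<noteq> [] \<and> hd xs = a \<and> last xs = b \<and> distinct xs \<and> walk R xs"
  using assms
proof (induction rule: rtranclp_induct)
  case base
  then show ?case by (auto intro: exI[of _ "[a]"] simp: walk_def)
next
  case (step y z)
  then obtain xs where xs: "xs \<noteq> []" "hd xs = a" "last xs = y" "distinct xs" "walk R xs" by blast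
  show ?case
  proof (cases "z \<in> set xs")
    case True
    then obtain i where i: "i < length xs" "xs ! i = z" by (auto simp: in_set_conv_nth)
    let ?ys = "take (Suc i) xs"
    have tk: "take (Suc i) xs = take i xs @ [xs ! i]" using i(1) by (rule take_Suc_conv_app_nth)
    have "?ys \<noteq> []" using xs(1) by simp
    moreover have "hd ?ys = a" using xs(1,2) by (cases xs) auto
    moreover have "last ?ys = z" using i(2) tk by simp
    moreover have "distinct ?ys" using xs(4) by simp
    moreover have "walk R ?ys" using xs(5) i unfolding walk_def by simp
    ultimately show ?thesis by blast
  next
    case False
    let ?ys = "xs @ [z]"
    have "walk R ?ys" unfolding walk_def
    proof (intro allI impI)
      fix j assume j: "j < length ?ys - 1"
      show "R (?ys ! j) (?ys ! Suc j)"
      proof (cases "j < length xs - 1")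
        case True
        then show ?thesis using xs(5) by (auto simp: walk_def nth_append)
      next
        case False
        then have "j = length xs - 1" using j by simp
        then show ?thesis using xs(1,3) step(2) by (auto simp: nth_append last_conv_nth)
      qed
    qed
    then show ?thesis using xs False by (intro exI[of _ ?ys]) auto
  qed
qed

lemma cycle_from_path:
  assumes e: "edge_rel T a b" and p: "(edge_rel (T - {{a,b}}))\<^sup>*\<^sup>* a b"
  shows "\<exists>vs. is_cycle T vs"
proof -
  let ?R = "edge_rel (T - {{a,b}})"
  obtain xs where xs: "xs \<noteq> []" "hd xs = a" "last xs = b" "distinct xs" "walk ?R xs"
    using distinct_walk[OF p] by blast
  have ab: "a \<noteq> b" using e by (simp add: edge_rel_def)
  have l2: "length xs \<ge> 2"
  proof (rule ccontr)
    assume "\<not> 2 \<le> length xs"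
    moreover have "length xs \<noteq> 0" using xs(1) by simp
    ultimately have "length xs = 1" by linarith
    then obtain x where "xs = [x]" by (auto simp: length_Suc_conv)
    then have "hd xs = last xs" by simp
    then show False using xs ab by simp
  qed
  have l3: "length xs \<ge> 3"
  proof (rule ccontr)
    assume "\<not> 3 \<le> length xs"
    then have l: "length xs = 2" using l2 by simp
    then have "?R (xs ! 0) (xs ! 1)" using xs(5) by (auto simp: walk_def)
    moreover have "xs ! 0 = a" using xs(1,2) by (simp add: hd_conv_nth)
    moreover have "xs ! 1 = b" using xs(1,3) l by (simp add: last_conv_nth)
    ultimately show False by (simp add: edge_rel_def)
  qed
  have c1: "\<forall>i < length xs - 1. edge_rel T (xs!i) (xs!Suc i)"
    using xs(5) unfolding walk_def edge_rel_def by blast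
  have c2: "edge_rel T (last xs) (hd xs)" using xs(2,3) edge_rel_sym[OF e] by simp
  have "is_cycle T xs" unfolding is_cycle_def using l3 xs(4) c1 c2 by blast
  then show ?thesis by blast
qed

lemma tree_PF:
  assumes T: "spanning_tree V E T" and c: "c \<in> V" and ok: "edges_ok V E"
  shows "T \<in> (\<lambda>f. tree_of f (V - {c})) ` PF V E c"
proof -
  let ?W = "V - {c}"
  let ?R = "edge_rel T"
  have TE: "T \<subseteq> E" and conn: "graph_connected V T" and acyc: "acyclic_graph T"
    using T by (auto simp: spanning_tree_def)
  have reachT: "?R\<^sup>*\<^sup>* v c" if "v \<in> V" for v using conn that c unfolding graph_connected_def by blast
  let ?d = "dep ?R c"
  define f where "f v = (if v \<in> ?W then (SOME w. ?R v w \<and> (?R ^^ (?d v - 1)) w c) else undefined)" for v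
  have fprop: "?R v (f v) \<and> (?R ^^ (?d v - 1)) (f v) c" if v: "v \<in> ?W" for v
  proof -
    have vV: "v \<in> V" using v by simp
    have a: "(?R ^^ ?d v) v c" by (rule dep_ex[OF reachT[OF vV]])
    have "?d v \<noteq> 0"
    proof
      assume "?d v = 0"
      then show False using a v by simp
    qed
    then have "(?R ^^ Suc (?d v - 1)) v c" using a by simp
    then have "\<exists>w. ?R v w \<and> (?R ^^ (?d v - 1)) w c" by (rule relpowp_Suc_D2)
    then have "?R v (SOME w. ?R v w \<and> (?R ^^ (?d v - 1)) w c) \<and> (?R ^^ (?d v - 1)) (SOME w. ?R v w \<and> (?R ^^ (?d v - 1)) w c) c"
      by (rule someI_ex)
    then show ?thesis using v by (simp add: f_def)
  qed
  have fV: "f v \<in> V" if "v \<in> ?W" for v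
    using fprop[OF that] edge_rel_in[OF ok] edge_rel_mono[OF TE] by blast
  have fd: "?d (f v) < ?d v" if v: "v \<in> ?W" for v
  proof -
    have "?d (f v) \<le> ?d v - 1" using fprop[OF v] by (intro dep_le) blast
    moreover have "?d v \<noteq> 0"
    proof
      assume "?d v = 0"
      moreover have "v \<in> V" using v by simp
      ultimately have "(?R ^^ 0) v c" using dep_ex[OF reachT] by metis
      then show False using v by simp
    qed
    ultimately show ?thesis by simp
  qed
  have reach: "\<forall>v\<in>V. ?d v = n \<longrightarrow> (pstep f ?W)\<^sup>*\<^sup>* v c" for n
  proof (induction n rule: less_induct)
    case (less n)
    show ?case
    proof (intro ballI impI)
      fix v assume v: "v \<in> V" "?d v = n"
      show "(pstep f ?W)\<^sup>*\<^sup>* v c"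
      proof (cases "v = c")
        case True then show ?thesis by simp
      next
        case False
        then have vW: "v \<in> ?W" using v by simp
        have "?d (f v) < n" using fd[OF vW] v(2) by simp
        then have "(pstep f ?W)\<^sup>*\<^sup>* (f v) c" using less.IH fV[OF vW] by blast
        moreover have "pstep f ?W v (f v)" using vW by (simp add: pstep_def)
        ultimately show ?thesis by (rule converse_rtranclp_into_rtranclp[rotated])
      qed
    qed
  qed
  have fx: "f \<in> extensional ?W" by (simp add: f_def extensional_def)
  have fe: "\<forall>v\<in>?W. edge_rel E v (f v)" using fprop edge_rel_mono[OF TE] by blast
  have fr: "\<forall>v\<in>V. (pstep f ?W)\<^sup>*\<^sup>* v c" using reach by blast
  have fPF: "f \<in> PF V E c" unfolding PF_def using fx fe fr by blast
  have sub: "tree_of f ?W \<subseteq> T"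
  proof
    fix e assume "e \<in> tree_of f ?W"
    then obtain v where v: "v \<in> ?W" "e = {v, f v}" unfolding tree_of_def by blast
    then show "e \<in> T" using fprop[OF v(1)] v(2) by (simp add: edge_rel_def)
  qed
  have "T \<subseteq> tree_of f ?W"
  proof
    fix e assume eT: "e \<in> T"
    have "e \<in> E" using eT TE by blast
    then have "\<exists>x y. x \<in> V \<and> y \<in> V \<and> x \<noteq> y \<and> e = {x,y}" using ok unfolding edges_ok_def by (rule bspec[rotated])
    then obtain a b where ab: "a \<in> V" "b \<in> V" "a \<noteq> b" "e = {a, b}" by (elim exE conjE)
    show "e \<in> tree_of f ?W"
    proof (rule ccontr)
      assume ne: "e \<notin> tree_of f ?W"
      have st: "spanning_tree V E (tree_of f ?W)" using PF_tree[OF fPF c ok] .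
      then have p1: "(edge_rel (tree_of f ?W))\<^sup>*\<^sup>* a b" using ab unfolding spanning_tree_def graph_connected_def by blast
      have p2: "edge_rel (T - {{a,b}}) x y" if h: "edge_rel (tree_of f ?W) x y" for x y
      proof -
        have xy: "x \<noteq> y" "{x,y} \<in> tree_of f ?W" using h unfolding edge_rel_def by auto
        then have "{x,y} \<noteq> e" using ne by metis
        moreover have "{x,y} \<in> T" using xy(2) sub by blast
        ultimately show ?thesis using xy(1) ab(4) unfolding edge_rel_def by simp
      qed
      have p3: "(edge_rel (T - {{a,b}}))\<^sup>*\<^sup>* a b" by (rule rtranclp_mono'[OF p2 p1])
      have p4: "edge_rel T a b" using eT ab by (simp add: edge_rel_def)
      obtain vs where "is_cycle T vs" using cycle_from_path[OF p4 p3] by blast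
      then show False using acyc unfolding acyclic_graph_def by blast
    qed
  qed
  then have "T = tree_of f ?W" using sub by (rule subset_antisym)
  then show ?thesis using fPF by (rule image_eqI)
qed

lemma count_trees_PF:
  assumes c: "c \<in> V" and ok: "edges_ok V E"
  shows "num_spanning_trees V E = card (PF V E c)"
proof -
  have "bij_betw (\<lambda>f. tree_of f (V - {c})) (PF V E c) {T. spanning_tree V E T}"
    unfolding bij_betw_def using PF_inj[OF c ok] PF_tree[OF _ c ok] tree_PF[OF _ c ok] by blast
  then show ?thesis unfolding num_spanning_trees_def by (simp add: bij_betw_same_card)
qed


lemma abel_term:
  fixes M D k :: nat
  assumes D: "1 \<le> D" "D \<le> M"
  shows "M * ((M choose D) * (k ^ D * (if D = M then 1 else D * M ^ (M - D - 1))))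
       = M * k * (((M - 1) choose (D - 1)) * k ^ (D - 1) * M ^ (M - D))"
proof -
  have e1: "M * (if D = M then 1 else D * M ^ (M - D - 1)) = D * M ^ (M - D)"
  proof (cases "D = M")
    case True then show ?thesis by simp
  next
    case False
    have "M - D \<noteq> 0" using D False by simp
    then obtain t where t: "M - D = Suc t" by (cases "M - D") auto
    have "M * (D * M ^ t) = D * (M * M ^ t)" by (rule mult.left_commute)
    then show ?thesis using False t by simp
  qed
  have e2: "D * (M choose D) = M * ((M - 1) choose (D - 1))"
    using times_binomial_minus1_eq[of D M] D by simp
  have kD: "k ^ D = k * k ^ (D - 1)" 
  proof -
    obtain t where "D = Suc t" using D by (cases D) auto
    then show ?thesis by simp
  qed
  have "M * ((M choose D) * (k ^ D * (if D = M then 1 else D * M ^ (M - D - 1))))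
      = (M choose D) * k ^ D * (M * (if D = M then 1 else D * M ^ (M - D - 1)))"
    by (simp only: mult.assoc mult.commute mult.left_commute)
  also have "\<dots> = (M choose D) * k ^ D * (D * M ^ (M - D))" by (simp only: e1)
  also have "\<dots> = (D * (M choose D)) * k ^ D * M ^ (M - D)" by (simp only: mult.assoc mult.commute mult.left_commute)
  also have "\<dots> = (M * ((M - 1) choose (D - 1))) * (k * k ^ (D - 1)) * M ^ (M - D)" by (simp only: e2 kD)
  also have "\<dots> = M * k * (((M - 1) choose (D - 1)) * k ^ (D - 1) * M ^ (M - D))"
    by (simp only: mult.assoc mult.commute mult.left_commute)
  finally show ?thesis .
qed

lemma abel_id:
  fixes m k :: nat
  assumes m: "m \<ge> 1"
  shows "(\<Sum>d\<in>{1..m}. (m choose d) * (k ^ d * (if d = m then 1 else d * m ^ (m - d - 1)))) = k * (m + k) ^ (m - 1)"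
proof -
  obtain n where n: "m = Suc n" using m by (cases m) auto
  let ?F = "\<lambda>d. (m choose d) * (k ^ d * (if d = m then 1 else d * m ^ (m - d - 1)))"
  have "m * (\<Sum>d\<in>{1..m}. ?F d) = (\<Sum>d\<in>{1..m}. m * ?F d)" by (simp add: sum_distrib_left)
  also have "\<dots> = (\<Sum>j\<in>{0..n}. m * ?F (Suc j))"
  proof (rule sum.reindex_cong[of Suc])
    show "inj_on Suc {0..n}" by simp
    show "{1..m} = Suc ` {0..n}" using n by (simp add: image_Suc_atLeastAtMost)
  qed (rule refl)
  also have "\<dots> = (\<Sum>j\<in>{0..n}. m * k * ((n choose j) * k ^ j * m ^ (n - j)))"
  proof (rule sum.cong[OF refl])
    fix j assume j: "j \<in> {0..n}"
    show "m * ?F (Suc j) = m * k * ((n choose j) * k ^ j * m ^ (n - j))"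
      using abel_term[of "Suc j" m k] j n by simp
  qed
  also have "\<dots> = m * k * (\<Sum>j\<le>n. (n choose j) * k ^ j * m ^ (n - j))"
    by (simp add: sum_distrib_left atLeast0AtMost)
  also have "\<dots> = m * k * (k + m) ^ n" by (simp add: binomial)
  finally have eq: "m * (\<Sum>d\<in>{1..m}. ?F d) = m * k * (k + m) ^ n" .
  have nm: "n = m - 1" using n by simp
  have "m * k * (k + m) ^ n = m * (k * (m + k) ^ (m - 1))" unfolding nm by (simp add: add.commute)
  with eq have eq2: "m * (\<Sum>d\<in>{1..m}. ?F d) = m * (k * (m + k) ^ (m - 1))" by (rule trans)
  have mne: "m \<noteq> 0" using m by simp
  show ?thesis using mult_left_cancel[OF mne] eq2 by blast
qed


definition FF :: "'a set \<Rightarrow> 'a set \<Rightarrow> ('a \<Rightarrow> 'a) set" where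
  "FF S R = {g. g \<in> extensional S \<and> (\<forall>v\<in>S. g v \<in> S \<union> R) \<and> (\<forall>v\<in>S. \<exists>r\<in>R. (pstep g S)\<^sup>*\<^sup>* v r)}"

lemma FF_sub: "FF S R \<subseteq> (\<Pi>\<^sub>E v\<in>S. S \<union> R)"
proof
  fix g assume "g \<in> FF S R"
  then have "g \<in> extensional S" "\<forall>v\<in>S. g v \<in> S \<union> R" unfolding FF_def by auto
  then show "g \<in> (\<Pi>\<^sub>E v\<in>S. S \<union> R)" by (simp add: PiE_iff)
qed

lemma FF_finite: "finite S \<Longrightarrow> finite R \<Longrightarrow> finite (FF S R)"
  using FF_sub by (rule finite_subset) (simp add: finite_PiE)

lemma FF_empty: "FF {} R = {\<lambda>_. undefined}"
  unfolding FF_def by auto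

lemma pstep_restrict: "pstep (restrict g A) A = pstep g A"
  by (auto simp: pstep_def fun_eq_iff)

lemma FF_hits:
  assumes g: "g \<in> FF S R" and disj: "S \<inter> R = {}" and v: "v \<in> S"
  shows "\<exists>x\<in>S. g x \<in> R"
proof -
  obtain r where r: "r \<in> R" "(pstep g S)\<^sup>*\<^sup>* v r" using g v unfolding FF_def by blast
  have gm: "\<forall>v\<in>S. g v \<in> S \<union> R" using g unfolding FF_def by blast
  have "v \<in> S \<longrightarrow> (\<exists>x\<in>S. g x \<in> R)"
    using r(2)
  proof (induction rule: converse_rtranclp_induct)
    case base then show ?case using r(1) disj by blast
  next
    case (step y z)
    then have y: "y \<in> S" "z = g y" by (auto simp: pstep_def)
    show ?case
    proof (cases "z \<in> R")
      case True then show ?thesis using y by blast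
    next
      case False then have "z \<in> S" using gm y by blast
      then show ?thesis using step.IH by blast
    qed
  qed
  then show ?thesis using v by blast
qed

lemma restrict_reach:
  assumes g: "g \<in> FF S R" and disj: "S \<inter> R = {}" and D: "D = {v\<in>S. g v \<in> R}" and v: "v \<in> S - D"
  shows "\<exists>d\<in>D. (pstep g (S - D))\<^sup>*\<^sup>* v d"
proof -
  obtain r where r: "r \<in> R" "(pstep g S)\<^sup>*\<^sup>* v r" using g v unfolding FF_def by blast
  have gm: "\<forall>v\<in>S. g v \<in> S \<union> R" using g unfolding FF_def by blast
  have "v \<in> S - D \<longrightarrow> (\<exists>d\<in>D. (pstep g (S - D))\<^sup>*\<^sup>* v d)"
    using r(2)
  proof (induction rule: converse_rtranclp_induct)
    case base then show ?case using r(1) disj by blast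
  next
    case (step y z)
    then have y: "y \<in> S" "z = g y" by (auto simp: pstep_def)
    show ?case
    proof
      assume yD: "y \<in> S - D"
      then have zS: "z \<in> S" using gm y D by auto
      have st: "pstep g (S - D) y z" using yD y by (simp add: pstep_def)
      show "\<exists>d\<in>D. (pstep g (S - D))\<^sup>*\<^sup>* y d"
      proof (cases "z \<in> D")
        case True then show ?thesis using st by blast
      next
        case False
        then obtain d where "d \<in> D" "(pstep g (S - D))\<^sup>*\<^sup>* z d" using step.IH zS by blast
        then show ?thesis using st by (meson converse_rtranclp_into_rtranclp)
      qed
    qed
  qed
  then show ?thesis using v by blast
qed

definition Xset :: "'a set \<Rightarrow> 'a set \<Rightarrow> 'a set \<Rightarrow> ('a \<Rightarrow> 'a) set" where
  "Xset S R D = {g \<in> FF S R. {v\<in>S. g v \<in> R} = D}"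

lemma Xset_card:
  assumes fin: "finite S" "finite R" and disj: "S \<inter> R = {}" and DS: "D \<subseteq> S"
  shows "card (Xset S R D) = card R ^ card D * card (FF (S - D) D)"
proof -
  let ?A = "Xset S R D"
  let ?B = "(\<Pi>\<^sub>E v\<in>D. R) \<times> FF (S - D) D"
  let ?phi = "\<lambda>g. (restrict g D, restrict g (S - D))"
  let ?psi = "\<lambda>(g1, g2). (\<lambda>v. if v \<in> D then g1 v else g2 v)"
  have phi: "?phi g \<in> ?B" if g: "g \<in> ?A" for g
  proof -
    have gF: "g \<in> FF S R" and Dd: "D = {v\<in>S. g v \<in> R}" using g by (auto simp: Xset_def)
    have gm: "\<forall>v\<in>S. g v \<in> S \<union> R" using gF unfolding FF_def by blast
    have 1: "restrict g D \<in> (\<Pi>\<^sub>E v\<in>D. R)" using Dd by auto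
    have "\<forall>v\<in>S - D. g v \<in> (S - D) \<union> D" using gm Dd by auto
    moreover have "\<forall>v\<in>S - D. \<exists>d\<in>D. (pstep (restrict g (S - D)) (S - D))\<^sup>*\<^sup>* v d"
      using restrict_reach[OF gF disj Dd] unfolding pstep_restrict by blast
    ultimately have 2: "restrict g (S - D) \<in> FF (S - D) D" unfolding FF_def by auto
    show ?thesis using 1 2 by simp
  qed
  have psi: "?psi p \<in> ?A" if p: "p \<in> ?B" for p
  proof -
    obtain g1 g2 where p12: "p = (g1, g2)" by (cases p)
    have g1: "g1 \<in> (\<Pi>\<^sub>E v\<in>D. R)" and g2: "g2 \<in> FF (S - D) D" using p p12 by auto
    define g where "g = (\<lambda>v. if v \<in> D then g1 v else g2 v)"
    have g2x: "g2 \<in> extensional (S - D)" and g2m: "\<forall>v\<in>S - D. g2 v \<in> (S - D) \<union> D"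
      and g2r: "\<forall>v\<in>S - D. \<exists>d\<in>D. (pstep g2 (S - D))\<^sup>*\<^sup>* v d"
      using g2 unfolding FF_def by auto
    have gx: "g \<in> extensional S" using g1 g2x DS by (auto simp: g_def extensional_def PiE_iff)
    have gm: "\<forall>v\<in>S. g v \<in> S \<union> R" using g1 g2m DS by (auto simp: g_def PiE_iff)
    have stepD: "pstep g S v (g1 v)" "g1 v \<in> R" if "v \<in> D" for v
      using that g1 DS by (auto simp: pstep_def g_def PiE_iff)
    have mono: "pstep g S x y" if "pstep g2 (S - D) x y" for x y
      using that by (auto simp: pstep_def g_def)
    have gr: "\<forall>v\<in>S. \<exists>r\<in>R. (pstep g S)\<^sup>*\<^sup>* v r"
    proof
      fix v assume vS: "v \<in> S"
      show "\<exists>r\<in>R. (pstep g S)\<^sup>*\<^sup>* v r"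
      proof (cases "v \<in> D")
        case True then show ?thesis using stepD[OF True] by blast
      next
        case False
        then obtain d where d: "d \<in> D" "(pstep g2 (S - D))\<^sup>*\<^sup>* v d" using g2r vS by blast
        have "(pstep g S)\<^sup>*\<^sup>* v d" using rtranclp_mono'[OF mono d(2)] .
        then have "(pstep g S)\<^sup>*\<^sup>* v (g1 d)" using stepD(1)[OF d(1)] by (rule rtranclp.rtrancl_into_rtrancl)
        then show ?thesis using stepD(2)[OF d(1)] by blast
      qed
    qed
    have gF: "g \<in> FF S R" unfolding FF_def using gx gm gr by blast
    have "{v\<in>S. g v \<in> R} = D"
    proof
      show "{v\<in>S. g v \<in> R} \<subseteq> D"
      proof
        fix v assume v: "v \<in> {v\<in>S. g v \<in> R}"
        show "v \<in> D"
        proof (rule ccontr)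
          assume "v \<notin> D"
          then have "g v = g2 v" "g2 v \<in> S" using v g2m DS by (auto simp: g_def)
          then show False using v disj by auto
        qed
      qed
      show "D \<subseteq> {v\<in>S. g v \<in> R}" using g1 DS by (auto simp: g_def PiE_iff)
    qed
    then show ?thesis using gF p12 g_def by (simp add: Xset_def)
  qed
  have left: "?psi (?phi g) = g" if g: "g \<in> ?A" for g
  proof -
    have "g \<in> extensional S" using g by (auto simp: Xset_def FF_def)
    then show ?thesis using DS by (auto simp: fun_eq_iff extensional_def)
  qed
  have right: "?phi (?psi p) = p" if p: "p \<in> ?B" for p
  proof -
    obtain g1 g2 where p12: "p = (g1, g2)" by (cases p)
    have g1: "g1 \<in> extensional D" and g2: "g2 \<in> extensional (S - D)" using p p12 by (auto simp: FF_def PiE_iff)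
    have "restrict (\<lambda>v. if v \<in> D then g1 v else g2 v) D = g1" using g1 by (auto simp: fun_eq_iff extensional_def)
    moreover have "restrict (\<lambda>v. if v \<in> D then g1 v else g2 v) (S - D) = g2" using g2 by (auto simp: fun_eq_iff extensional_def)
    ultimately show ?thesis using p12 by simp
  qed
  have "bij_betw ?phi ?A ?B"
  proof (rule bij_betw_byWitness[where f' = ?psi])
    show "\<forall>a\<in>?A. ?psi (?phi a) = a" using left by blast
    show "\<forall>a'\<in>?B. ?phi (?psi a') = a'" using right by blast
    show "?phi ` ?A \<subseteq> ?B" using phi by blast
    show "?psi ` ?B \<subseteq> ?A" using psi by blast
  qed
  then have "card ?A = card ?B" by (rule bij_betw_same_card)
  also have "\<dots> = card (\<Pi>\<^sub>E v\<in>D. R) * card (FF (S - D) D)" by (rule card_cartesian_product)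
  also have "card (\<Pi>\<^sub>E v\<in>D. R) = card R ^ card D"
    using DS fin by (simp add: card_PiE finite_subset)
  finally show ?thesis .
qed


lemma FF_union:
  assumes disj: "S \<inter> R = {}" and ne: "S \<noteq> {}"
  shows "FF S R = (\<Union>D\<in>Pow S - {{}}. Xset S R D)"
proof
  show "FF S R \<subseteq> (\<Union>D\<in>Pow S - {{}}. Xset S R D)"
  proof
    fix g assume g: "g \<in> FF S R"
    obtain v where v: "v \<in> S" using ne by blast
    obtain x where "x \<in> S" "g x \<in> R" using FF_hits[OF g disj v] by blast
    then have "{v\<in>S. g v \<in> R} \<in> Pow S - {{}}" by auto
    moreover have "g \<in> Xset S R {v\<in>S. g v \<in> R}" using g by (simp add: Xset_def)
    ultimately show "g \<in> (\<Union>D\<in>Pow S - {{}}. Xset S R D)" by blast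
  qed
  show "(\<Union>D\<in>Pow S - {{}}. Xset S R D) \<subseteq> FF S R" by (auto simp: Xset_def)
qed

lemma FF_card_rec:
  assumes fin: "finite S" "finite R" and disj: "S \<inter> R = {}" and ne: "S \<noteq> {}"
  shows "card (FF S R) = (\<Sum>D\<in>Pow S - {{}}. card R ^ card D * card (FF (S - D) D))"
proof -
  have "card (FF S R) = card (\<Union>D\<in>Pow S - {{}}. Xset S R D)" using FF_union[OF disj ne] by simp
  also have "\<dots> = (\<Sum>D\<in>Pow S - {{}}. card (Xset S R D))"
  proof (rule card_UN_disjoint)
    show "finite (Pow S - {{}})" using fin by simp
    show "\<forall>D\<in>Pow S - {{}}. finite (Xset S R D)"
      using FF_finite[OF fin] by (auto simp: Xset_def)
    show "\<forall>D\<in>Pow S - {{}}. \<forall>D'\<in>Pow S - {{}}. D \<noteq> D' \<longrightarrow> Xset S R D \<inter> Xset S R D' = {}"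
      by (auto simp: Xset_def)
  qed
  also have "\<dots> = (\<Sum>D\<in>Pow S - {{}}. card R ^ card D * card (FF (S - D) D))"
    by (rule sum.cong[OF refl]) (use Xset_card[OF fin disj] in auto)
  finally show ?thesis .
qed

lemma sum_subsets_card:
  assumes fin: "finite S"
  shows "(\<Sum>D\<in>Pow S - {{}}. h (card D)) = (\<Sum>d\<in>{1..card S}. (card S choose d) * h d)"
proof -
  have sub: "card ` (Pow S - {{}}) \<subseteq> {1..card S}"
  proof
    fix d assume "d \<in> card ` (Pow S - {{}})"
    then obtain D where D: "D \<subseteq> S" "D \<noteq> {}" "d = card D" by auto
    have "finite D" using D fin finite_subset by blast
    then have "card D \<ge> 1" using D by (simp add: Suc_le_eq card_gt_0_iff)
    moreover have "card D \<le> card S" using D fin by (simp add: card_mono)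
    ultimately show "d \<in> {1..card S}" using D by simp
  qed
  have "(\<Sum>D\<in>Pow S - {{}}. h (card D)) = (\<Sum>d\<in>{1..card S}. \<Sum>D\<in>{D \<in> Pow S - {{}}. card D = d}. h (card D))"
    using sum.group[OF _ _ sub, of "\<lambda>D. h (card D)"] fin by simp
  also have "\<dots> = (\<Sum>d\<in>{1..card S}. (card S choose d) * h d)"
  proof (rule sum.cong[OF refl])
    fix d assume d: "d \<in> {1..card S}"
    have eq: "{D \<in> Pow S - {{}}. card D = d} = {D. D \<subseteq> S \<and> card D = d}" using d by auto
    have "(\<Sum>D\<in>{D \<in> Pow S - {{}}. card D = d}. h (card D)) = (\<Sum>D\<in>{D \<in> Pow S - {{}}. card D = d}. h d)"
      by (rule sum.cong[OF refl]) simp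
    also have "\<dots> = card {D \<in> Pow S - {{}}. card D = d} * h d" by simp
    also have "\<dots> = (card S choose d) * h d" unfolding eq n_subsets[OF fin] ..
    finally show "(\<Sum>D\<in>{D \<in> Pow S - {{}}. card D = d}. h (card D)) = (card S choose d) * h d" .
  qed
  finally show ?thesis .
qed

lemma FF_card:
  assumes "finite S" "finite R" "S \<inter> R = {}" "S \<noteq> {}"
  shows "card (FF S R) = card R * (card S + card R) ^ (card S - 1)"
  using assms
proof (induction "card S" arbitrary: S R rule: less_induct)
  case less
  note fin = less.prems(1,2) and disj = less.prems(3) and ne = less.prems(4)
  let ?m = "card S" and ?k = "card R"
  let ?h = "\<lambda>d. ?k ^ d * (if d = ?m then 1 else d * ?m ^ (?m - d - 1))"
  have tm: "card R ^ card D * card (FF (S - D) D) = ?h (card D)" if D: "D \<in> Pow S - {{}}" for D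
  proof -
    have DS: "D \<subseteq> S" and Dne: "D \<noteq> {}" using D by auto
    have finD: "finite D" using DS fin finite_subset by blast
    have c1: "card (S - D) = ?m - card D" using card_Diff_subset[OF finD DS] .
    have c2: "card D \<le> ?m" using card_mono[OF fin(1) DS] .
    have cS: "card (S - D) + card D = ?m" using c1 c2 by simp
    show ?thesis
    proof (cases "D = S")
      case True
      then show ?thesis by (simp add: FF_empty)
    next
      case False
      then have ne': "S - D \<noteq> {}" using DS by blast
      have "card D > 0" using finD Dne by (simp add: card_gt_0_iff)
      then have lt: "card (S - D) < ?m" using c1 c2 by simp
      have cD: "card D \<noteq> ?m" using card_subset_eq[OF fin(1) DS] False by auto
      have "card (FF (S - D) D) = card D * (card (S - D) + card D) ^ (card (S - D) - 1)"
      proof (rule less.hyps)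
        show "card (S - D) < card S" by (rule lt)
        show "finite (S - D)" using fin by simp
        show "finite D" by (rule finD)
        show "(S - D) \<inter> D = {}" by blast
        show "S - D \<noteq> {}" by (rule ne')
      qed
      also have "\<dots> = card D * ?m ^ (?m - card D - 1)" using cS c1 by simp
      finally show ?thesis using cD by simp
    qed
  qed
  have "card (FF S R) = (\<Sum>D\<in>Pow S - {{}}. card R ^ card D * card (FF (S - D) D))"
    by (rule FF_card_rec[OF fin disj ne])
  also have "\<dots> = (\<Sum>D\<in>Pow S - {{}}. ?h (card D))" by (rule sum.cong[OF refl]) (rule tm)
  also have "\<dots> = (\<Sum>d\<in>{1..?m}. (?m choose d) * ?h d)" by (rule sum_subsets_card[OF fin(1)])
  also have "\<dots> = ?k * (?m + ?k) ^ (?m - 1)"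
    by (rule abel_id) (use fin ne in \<open>simp add: Suc_le_eq card_gt_0_iff\<close>)
  finally show ?case .
qed


lemma PF_decomp:
  assumes Kc: "c \<in> K" and KV: "K \<subseteq> V"
    and adjK: "\<And>y z. y \<in> K - {c} \<Longrightarrow> edge_rel E y z \<longleftrightarrow> (z \<in> K \<and> z \<noteq> y)"
  shows "card (PF V E c) = card (FF (K - {c}) {c}) * card ((\<lambda>f. restrict f (V - K)) ` PF V E c)"
proof -
  let ?S = "K - {c}" and ?W = "V - {c}"
  let ?B = "(\<lambda>f. restrict f (V - K)) ` PF V E c"
  let ?phi = "\<lambda>f. (restrict f ?S, restrict f (V - K))"
  let ?psi = "\<lambda>(g, h). (\<lambda>v. if v \<in> ?S then g v else h v)"
  have SW: "?S \<subseteq> ?W" using KV by blast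
  have phi: "?phi f \<in> FF ?S {c} \<times> ?B" if f: "f \<in> PF V E c" for f
  proof -
    have fe: "\<And>v. v \<in> ?W \<Longrightarrow> edge_rel E v (f v)" and fr: "\<And>v. v \<in> V \<Longrightarrow> (pstep f ?W)\<^sup>*\<^sup>* v c"
      using f unfolding PF_def by auto
    have fm: "f v \<in> ?S \<union> {c}" if v: "v \<in> ?S" for v
      using adjK[OF v, of "f v"] fe[of v] v SW by auto
    have rr: "y \<in> K \<longrightarrow> (pstep f ?S)\<^sup>*\<^sup>* y c" if "(pstep f ?W)\<^sup>*\<^sup>* y c" for y
      using that
    proof (induction rule: converse_rtranclp_induct)
      case base then show ?case by simp
    next
      case (step y z)
      then have y: "y \<in> ?W" "z = f y" by (auto simp: pstep_def)
      show ?case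
      proof
        assume yK: "y \<in> K"
        then have yS: "y \<in> ?S" using y by simp
        then have "z \<in> K" using fm[OF yS] y Kc by auto
        then have "(pstep f ?S)\<^sup>*\<^sup>* z c" using step.IH by blast
        moreover have "pstep f ?S y z" using yS y by (simp add: pstep_def)
        ultimately show "(pstep f ?S)\<^sup>*\<^sup>* y c" by (rule converse_rtranclp_into_rtranclp[rotated])
      qed
    qed
    have "\<forall>v\<in>?S. \<exists>r\<in>{c}. (pstep (restrict f ?S) ?S)\<^sup>*\<^sup>* v r"
      unfolding pstep_restrict using rr fr KV by blast
    then have "restrict f ?S \<in> FF ?S {c}" unfolding FF_def using fm by auto
    then show ?thesis using f by blast
  qed
  have psi: "?psi q \<in> PF V E c" if q: "q \<in> FF ?S {c} \<times> ?B" for q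
  proof -
    obtain g h where q12: "q = (g, h)" by (cases q)
    have g: "g \<in> FF ?S {c}" and hB: "h \<in> ?B" using q q12 by auto
    then obtain f0 where f0: "f0 \<in> PF V E c" and h: "h = restrict f0 (V - K)" by blast
    have f0e: "\<And>v. v \<in> ?W \<Longrightarrow> edge_rel E v (f0 v)" and f0r: "\<And>v. v \<in> V \<Longrightarrow> (pstep f0 ?W)\<^sup>*\<^sup>* v c"
      using f0 unfolding PF_def by auto
    have gx: "g \<in> extensional ?S" and gm: "\<forall>v\<in>?S. g v \<in> ?S \<union> {c}"
      and gr: "\<forall>v\<in>?S. (pstep g ?S)\<^sup>*\<^sup>* v c"
      using g unfolding FF_def by auto
    define f where "f = (\<lambda>v. if v \<in> ?S then g v else h v)"
    have fx: "f \<in> extensional ?W" using h KV Kc by (auto simp: f_def extensional_def)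
    have gne: "g v \<noteq> v" if v: "v \<in> ?S" for v
    proof
      assume gv: "g v = v"
      have "c \<in> {v}" by (rule closed_no_reach[OF gr[rule_format, OF v]]) (use gv in auto)
      then show False using v by simp
    qed
    have fe: "edge_rel E v (f v)" if v: "v \<in> ?W" for v
    proof (cases "v \<in> ?S")
      case True
      then show ?thesis using adjK[OF True, of "g v"] gm gne[OF True] Kc by (auto simp: f_def)
    next
      case False
      then have "v \<in> V - K" using v by auto
      then show ?thesis using f0e[OF v] False by (simp add: f_def h)
    qed
    have mono: "pstep f ?W x y" if "pstep g ?S x y" for x y
      using that SW by (auto simp: pstep_def f_def)
    have rr: "y \<notin> ?S \<longrightarrow> (pstep f ?W)\<^sup>*\<^sup>* y c" if "(pstep f0 ?W)\<^sup>*\<^sup>* y c" for y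
      using that
    proof (induction rule: converse_rtranclp_induct)
      case base then show ?case by simp
    next
      case (step y z)
      then have y: "y \<in> ?W" "z = f0 y" by (auto simp: pstep_def)
      show ?case
      proof
        assume yS: "y \<notin> ?S"
        then have yVK: "y \<in> V - K" using y by auto
        then have fy: "f y = z" using yS y by (simp add: f_def h)
        have zS: "z \<notin> ?S"
        proof
          assume zS: "z \<in> ?S"
          have "edge_rel E z y" using f0e[OF y(1)] y(2) by (simp add: edge_rel_sym)
          then have "y \<in> K" using adjK[OF zS] by blast
          then show False using yVK by blast
        qed
        then have "(pstep f ?W)\<^sup>*\<^sup>* z c" using step.IH by blast
        moreover have "pstep f ?W y z" using y fy by (simp add: pstep_def)
        ultimately show "(pstep f ?W)\<^sup>*\<^sup>* y c" by (rule converse_rtranclp_into_rtranclp[rotated])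
      qed
    qed
    have fr: "(pstep f ?W)\<^sup>*\<^sup>* v c" if v: "v \<in> V" for v
    proof (cases "v \<in> ?S")
      case True
      show ?thesis by (rule rtranclp_mono'[of "pstep g ?S" "pstep f ?W", OF mono gr[rule_format, OF True]])
    next
      case False
      then show ?thesis using rr f0r[OF v] by blast
    qed
    have "f \<in> PF V E c" unfolding PF_def using fx fe fr by blast
    then show ?thesis using q12 f_def by simp
  qed
  have left: "?psi (?phi f) = f" if f: "f \<in> PF V E c" for f
  proof -
    have "f \<in> extensional ?W" using f unfolding PF_def by blast
    then show ?thesis using KV Kc by (auto simp: fun_eq_iff extensional_def)
  qed
  have right: "?phi (?psi q) = q" if q: "q \<in> FF ?S {c} \<times> ?B" for q
  proof -
    obtain g h where q12: "q = (g, h)" by (cases q)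
    have g: "g \<in> extensional ?S" using q q12 by (auto simp: FF_def)
    obtain f0 where h: "h = restrict f0 (V - K)" using q q12 by auto
    have "restrict (\<lambda>v. if v \<in> ?S then g v else h v) ?S = g" using g by (auto simp: fun_eq_iff extensional_def)
    moreover have "restrict (\<lambda>v. if v \<in> ?S then g v else h v) (V - K) = h" using h by (auto simp: fun_eq_iff)
    ultimately show ?thesis using q12 by simp
  qed
  have "bij_betw ?phi (PF V E c) (FF ?S {c} \<times> ?B)"
  proof (rule bij_betw_byWitness[where f' = ?psi])
    show "\<forall>a\<in>PF V E c. ?psi (?phi a) = a" using left by blast
    show "\<forall>a'\<in>FF ?S {c} \<times> ?B. ?phi (?psi a') = a'" using right by blast
    show "?phi ` PF V E c \<subseteq> FF ?S {c} \<times> ?B" using phi by blast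
    show "?psi ` (FF ?S {c} \<times> ?B) \<subseteq> PF V E c" using psi by blast
  qed
  then have "card (PF V E c) = card (FF ?S {c} \<times> ?B)" by (rule bij_betw_same_card)
  also have "\<dots> = card (FF ?S {c}) * card ?B" by (rule card_cartesian_product)
  finally show ?thesis .
qed


theorem lemma3p5:
  fixes G :: "('a, 'b) monoid_scheme" and p :: nat
  assumes "group G" and "finite (carrier G)"
    and "p \<in> prime_divs G" and "p \<in> max_elem_orders G"
  shows "p ^ (p - 2) dvd kappa G"
proof -
  interpret group G by (rule assms(1))
  have pr: "Factorial_Ring.prime p" using assms(3) by (simp add: prime_divs_def)
  obtain x where x: "x \<in> carrier G" "ord x = p"
    using assms(4) by (auto simp: max_elem_orders_def elem_orders_def)
  have maxo: "ord z = p" if "z \<in> carrier G" "p dvd ord z" for z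
    using assms(4) that by (auto simp: max_elem_orders_def elem_orders_def)
  define H where "H = generate G {x}"
  have Hsub: "subgroup H G" unfolding H_def using x(1) by (intro generate_is_subgroup) simp
  have HV: "H \<subseteq> carrier G" using subgroup.subset[OF Hsub] .
  have one: "\<one>\<^bsub>G\<^esub> \<in> H" using subgroup.one_closed[OF Hsub] .
  have xH: "x \<in> H" unfolding H_def by (rule generate.incl) simp
  have cardH: "card H = p" using generate_pow_card[OF x(1)] x(2) by (simp add: H_def)
  have finH: "finite H" using finite_subset[OF HV assms(2)] .
  have p2: "p \<ge> 2" using pr by (simp add: prime_ge_2_nat)
  have G2: "generate G {y} = H" if y: "y \<in> H" "y \<noteq> \<one>\<^bsub>G\<^esub>" for y
  proof -
    have yG: "y \<in> carrier G" using y HV by blast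
    obtain k :: nat where k: "y = x [^]\<^bsub>G\<^esub> k"
      using y(1) unfolding H_def generate_pow_on_finite_carrier[OF assms(2) x(1)] by blast
    have "y [^]\<^bsub>G\<^esub> p = \<one>\<^bsub>G\<^esub>"
    proof -
      have "y [^]\<^bsub>G\<^esub> p = x [^]\<^bsub>G\<^esub> (k * p)" using k x(1) by (simp add: nat_pow_pow)
      also have "\<dots> = (x [^]\<^bsub>G\<^esub> p) [^]\<^bsub>G\<^esub> k" using x(1) by (simp add: nat_pow_pow mult.commute)
      also have "\<dots> = \<one>\<^bsub>G\<^esub>"
      proof -
        have "x [^]\<^bsub>G\<^esub> p = \<one>\<^bsub>G\<^esub>" using pow_ord_eq_1[OF x(1)] x(2) by simp
        then show ?thesis by simp
      qed
      finally show ?thesis .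
    qed
    then have "ord y dvd p" using pow_eq_id[OF yG] by simp
    moreover have "ord y \<noteq> 1" using ord_eq_1[OF yG] y(2) by simp
    ultimately have oy: "ord y = p" using pr by (auto simp: prime_nat_iff)
    have sub: "generate G {y} \<subseteq> H" using generate_subgroup_incl[of "{y}" H] y(1) Hsub by simp
    have "card (generate G {y}) = card H" using generate_pow_card[OF yG] oy cardH by simp
    then show ?thesis using card_subset_eq[OF finH sub] by simp
  qed
  have G3: "z \<in> H" if z: "z \<in> carrier G" "H \<subseteq> generate G {z}" for z
  proof -
    have "x \<in> generate G {z}" using xH z(2) by blast
    then obtain k :: nat where k: "x = z [^]\<^bsub>G\<^esub> k"
      unfolding generate_pow_on_finite_carrier[OF assms(2) z(1)] by blast
    have "x [^]\<^bsub>G\<^esub> ord z = \<one>\<^bsub>G\<^esub>"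
    proof -
      have "x [^]\<^bsub>G\<^esub> ord z = z [^]\<^bsub>G\<^esub> (k * ord z)" using k z(1) by (simp add: nat_pow_pow)
      also have "\<dots> = (z [^]\<^bsub>G\<^esub> ord z) [^]\<^bsub>G\<^esub> k" by (simp only: nat_pow_pow[OF z(1)] mult.commute)
      also have "\<dots> = \<one>\<^bsub>G\<^esub>" using z(1) by simp
      finally show ?thesis .
    qed
    then have "p dvd ord z" using pow_eq_id[OF x(1)] x(2) by simp
    then have oz: "ord z = p" using maxo z(1) by blast
    have fz: "finite (generate G {z})" using generate_incl[of "{z}"] z(1) assms(2) finite_subset by blast
    have "card H = card (generate G {z})" using generate_pow_card[OF z(1)] oz cardH by simp
    then have "H = generate G {z}" using card_subset_eq[OF fz z(2)] by simp
    moreover have "z \<in> generate G {z}" by (rule generate.incl) simp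
    ultimately show ?thesis by simp
  qed
  define E where "E = power_graph_edges G"
  have er: "edge_rel E a b \<longleftrightarrow> a \<in> carrier G \<and> b \<in> carrier G \<and> a \<noteq> b \<and> power_adj G a b" for a b
  proof
    assume "edge_rel E a b"
    then have ab: "a \<noteq> b" "{a, b} \<in> E" by (auto simp: edge_rel_def)
    then obtain u v where uv: "{a, b} = {u, v}" "u \<in> carrier G" "v \<in> carrier G" "power_adj G u v"
      unfolding E_def power_graph_edges_def graph_edges_def by blast
    then have "(a = u \<and> b = v) \<or> (a = v \<and> b = u)" by (simp add: doubleton_eq_iff)
    then show "a \<in> carrier G \<and> b \<in> carrier G \<and> a \<noteq> b \<and> power_adj G a b"
      using uv ab by (auto simp: power_adj_def)
  next
    assume "a \<in> carrier G \<and> b \<in> carrier G \<and> a \<noteq> b \<and> power_adj G a b"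
    then show "edge_rel E a b" unfolding edge_rel_def E_def power_graph_edges_def graph_edges_def by blast
  qed
  have ok: "edges_ok (carrier G) E"
    unfolding edges_ok_def E_def power_graph_edges_def graph_edges_def by blast
  have adjK: "edge_rel E y z \<longleftrightarrow> (z \<in> H \<and> z \<noteq> y)" if y: "y \<in> H - {\<one>\<^bsub>G\<^esub>}" for y z
  proof
    assume e: "edge_rel E y z"
    then have zG: "z \<in> carrier G" and yz: "y \<noteq> z" and pa: "power_adj G y z" using er by auto
    have gy: "generate G {y} = H" using G2 y by blast
    from pa have "H \<subseteq> generate G {z} \<or> generate G {z} \<subseteq> H" unfolding power_adj_def gy .
    then have "z \<in> H"
    proof
      assume "H \<subseteq> generate G {z}" then show "z \<in> H" using G3 zG by blast
    next
      assume "generate G {z} \<subseteq> H"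
      moreover have "z \<in> generate G {z}" by (rule generate.incl) simp
      ultimately show "z \<in> H" by blast
    qed
    then show "z \<in> H \<and> z \<noteq> y" using yz by blast
  next
    assume z: "z \<in> H \<and> z \<noteq> y"
    have gy: "generate G {y} = H" using G2 y by blast
    have "generate G {z} \<subseteq> H" using generate_subgroup_incl[of "{z}" H] z Hsub by simp
    then have "power_adj G y z" unfolding power_adj_def gy by blast
    then show "edge_rel E y z" using er z y HV by blast
  qed
  have oneG: "\<one>\<^bsub>G\<^esub> \<in> carrier G" by simp
  have k1: "kappa G = card (PF (carrier G) E \<one>\<^bsub>G\<^esub>)"
    unfolding kappa_def E_def[symmetric] by (rule count_trees_PF[OF oneG ok])
  have k2: "card (PF (carrier G) E \<one>\<^bsub>G\<^esub>) = card (FF (H - {\<one>\<^bsub>G\<^esub>}) {\<one>\<^bsub>G\<^esub>}) * card ((\<lambda>f. restrict f (carrier G - H)) ` PF (carrier G) E \<one>\<^bsub>G\<^esub>)"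
    by (rule PF_decomp[OF one HV adjK])
  have cS: "card (H - {\<one>\<^bsub>G\<^esub>}) = p - 1" using cardH one finH by simp
  have k3: "card (FF (H - {\<one>\<^bsub>G\<^esub>}) {\<one>\<^bsub>G\<^esub>}) = p ^ (p - 2)"
  proof -
    have "H - {\<one>\<^bsub>G\<^esub>} \<noteq> {}"
    proof
      assume "H - {\<one>\<^bsub>G\<^esub>} = {}"
      then have "card (H - {\<one>\<^bsub>G\<^esub>}) = card ({}::'a set)" by (rule arg_cong)
      then show False using cS p2 by simp
    qed
    then have "card (FF (H - {\<one>\<^bsub>G\<^esub>}) {\<one>\<^bsub>G\<^esub>}) = card {\<one>\<^bsub>G\<^esub>} * (card (H - {\<one>\<^bsub>G\<^esub>}) + card {\<one>\<^bsub>G\<^esub>}) ^ (card (H - {\<one>\<^bsub>G\<^esub>}) - 1)"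
      using finH by (intro FF_card) auto
    also have "\<dots> = p ^ (p - 2)" using cS p2 by simp
    finally show ?thesis .
  qed
  show ?thesis using k1 k2 k3 by simp
qed


end
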